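(* Consider Algorithm iR2N (described in the context) and suppose (A1), (A2), (A3), (A4), (A6), (A7) hold. Let $\epsilon>0$, $k_\epsilon=\min\{k\in\mathbb{N}\mid \nu_k^{-1}\|\hat s_{k,\mathrm{cp}}\|<\epsilon\}$, $\mathcal{S}(\epsilon)=\{k\in\mathbb{N}\mid\hat\rho_k\ge\hat\eta_1,\ k<k_\epsilon\}$ and $\mathcal{U}(\epsilon)=\{k\in\mathbb{N}\mid\hat\rho_k<\hat\eta_1,\ k<k_\epsilon\}$. Then $$|\mathcal{S}(\epsilon)|+|\mathcal{U}(\epsilon)|\le\big(1+|\log_{\gamma_1}(\gamma_3)|\big)\,\omega_s\,\epsilon^{-2}+\log_{\gamma_1}(\sigma_{\max}/\sigma_0)=O(\epsilon^{-2}),$$ where $\omega_s=\dfrac{(f+h)(x_0)-(f+h)_{\mathrm{low}}}{\tfrac12\eta_1(1-\theta_1)\nu_{\min}}$. In particular $k_\epsilon=|\mathcal{S}(\epsilon)|+|\mathcal{U}(\epsilon)|+1$ is finite.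
   Context: Setting. $f:\mathbb{R}^n\to\mathbb{R}$ is continuously differentiable, $h:\mathbb{R}^n\to\mathbb{R}\cup\{+\infty\}$ is proper and lower semicontinuous; the problem is $\min_x f(x)+h(x)$. $\|\cdot\|$ is the Euclidean norm (spectral norm for matrices). For each $x$, approximations $\hat f(x)\in\mathbb{R}$ of $f(x)$ and $\hat\nabla f(x)\in\mathbb{R}^n$ of $\nabla f(x)$ are available. For each $x$, $\psi(\cdot;x):\mathbb{R}^n\to\mathbb{R}\cup\{+\infty\}$ is proper, lsc, satisfies $\psi(0;x)=h(x)$ and $\partial\psi(0;x)\subseteq\partial h(x)$ ($\partial$ = limiting subdifferential), and is uniformly prox-bounded: there is $\lambda>0$ such that for every $x$ and every $0<\lambda'<\lambda$, $w\mapsto\psi(w;x)+\tfrac{1}{2\lambda'}\|w\|^2$ is bounded below. Models: $\varphi_{\mathrm{cp}}(s;x)=\hat f(x)+\hat\nabla f(x)^Ts$; $m_{\mathrm{cp}}(s;x,\nu^{-1})=\varphi_{\mathrm{cp}}(s;x)+\tfrac12\nu^{-1}\|s\|^2+\psi(s;x)$; for a symmetric $B(x)\in\mathbb{R}^{n\times n}$, $\varphi(s;x)=\hat f(x)+\hat\nabla f(x)^Ts+\tfrac12 s^TB(x)s$ and $m(s;x,\sigma)=\varphi(s;x)+\tfrac12\sigma\|s\|^2+\psi(s;x)$. Algorithm iR2N. Constants: $\kappa_f,\kappa_\nabla>0$, $0<\gamma_3\le 1<\gamma_1\le\gamma_2$, $0<\hat\eta_1\le\hat\eta_2<1$, $0<\theta_1<1<\theta_2$,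 $\sigma_{\min}>4\kappa_f\theta_1\theta_2^2/(\hat\eta_1(1-\theta_1))$, $\sigma_0\ge\sigma_{\min}$, $x_0\in\mathbb{R}^n$. At iteration $k=0,1,\dots$: choose symmetric $B_k=B(x_k)$; set $\nu_k=\theta_1/(\|B_k\|+\sigma_k)$; compute $\hat s_{k,\mathrm{cp}}$ with $m_{\mathrm{cp}}(\hat s_{k,\mathrm{cp}};x_k,\nu_k^{-1})\le m_{\mathrm{cp}}(0;x_k,\nu_k^{-1})$ (an approximate minimizer of $m_{\mathrm{cp}}(\cdot;x_k,\nu_k^{-1})$ obtained by a descent procedure from $s=0$) and set $\hat\xi_{k,\mathrm{cp}}=(\varphi_{\mathrm{cp}}+\psi)(0;x_k)-(\varphi_{\mathrm{cp}}+\psi)(\hat s_{k,\mathrm{cp}};x_k)$; compute $s_k$ with $m(s_k;x_k,\sigma_k)\le m(\hat s_{k,\mathrm{cp}};x_k,\sigma_k)$; if $\|s_k\|>\theta_2\|\hat s_{k,\mathrm{cp}}\|$, reset $s_k=\hat s_{k,\mathrm{cp}}$ (these computations are repeated with refined $\hat f,\hat\nabla f$ until (A6) holds). Compute $$\hat\rho_k=\frac{\hat f(x_k)+h(x_k)-\hat f(x_k+s_k)-h(x_k+s_k)}{\varphi(0;x_k)+\psi(0;x_k)-\varphi(s_k;x_k)-\psi(s_k;x_k)},$$ where $\varphi(\cdot;x_k)$ uses $B_k$. If $\hat\rho_k\ge\hat\eta_1$ (successful) set $x_{k+1}=x_k+s_k$, else $x_{k+1}=x_k$. Choose $\sigma_{k+1}\in[\gamma_3\sigma_k,\sigma_k]$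 if $\hat\rho_k\ge\hat\eta_2$ (very successful), $\sigma_{k+1}\in[\sigma_k,\gamma_1\sigma_k]$ if $\hat\eta_1\le\hat\rho_k<\hat\eta_2$, $\sigma_{k+1}\in[\gamma_1\sigma_k,\gamma_2\sigma_k]$ if $\hat\rho_k<\hat\eta_1$; then reset $\sigma_{k+1}=\max(\sigma_{k+1},\sigma_{\min})$. Assumptions. (A1) $|f(x+s)-f(x)-\nabla f(x)^Ts|\le\tfrac12L\|s\|^2$ for all $x,s$, for some $L\ge0$. (A2) $\|B_k\|\le\kappa_B$ for all $k$, for some $\kappa_B>0$. (A3) $|\psi(s;x)-h(x+s)|\le\kappa_h\|s\|^2$ for all $x,s$, for some $\kappa_h>0$. (A4) For all $k$, $\varphi(0;x_k)+\psi(0;x_k)-(\varphi(s_k;x_k)+\psi(s_k;x_k))\ge(1-\theta_1)\hat\xi_{k,\mathrm{cp}}$. (A6) For all $k$: $|f(x_k)-\hat f(x_k)|\le\kappa_f\|s_k\|^2$, $|f(x_k+s_k)-\hat f(x_k+s_k)|\le\kappa_f\|s_k\|^2$, $\|\nabla f(x_k)-\hat\nabla f(x_k)\|\le\kappa_\nabla\|s_k\|$. (A7) There is $(f+h)_{\mathrm{low}}\in\mathbb{R}$ with $(f+h)(x)\ge(f+h)_{\mathrm{low}}$ for all $x$. Constants: $\eta_1=\hat\eta_1-4\kappa_f\theta_1\theta_2^2/((1-\theta_1)\sigma_{\min})$; $\sigma_{\mathrm{succ}}=\max\big(\theta_1\theta_2^2(L+\kappa_B+2\kappa_h+4\kappa_f+2\kappa_\nabla)/((1-\theta_1)(1-\hat\eta_2)),\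 \lambda^{-1}\big)$; $\sigma_{\max}=\max(\sigma_0,\gamma_2\sigma_{\mathrm{succ}})$ (an upper bound on all $\sigma_k$); $\nu_{\min}=\theta_1/(\kappa_B+\sigma_{\max})$. *)

theory Defs
  imports "HOL-Analysis.Analysis"
begin

definition proper_fun :: "('a \<Rightarrow> ereal) \<Rightarrow> bool" where
  "proper_fun F \<longleftrightarrow> (\<forall>x. F x \<noteq> -\<infinity>) \<and> (\<exists>x. F x \<noteq> \<infinity>)"

definition lsc_fun :: "('a::topological_space \<Rightarrow> ereal) \<Rightarrow> bool" where
  "lsc_fun F \<longleftrightarrow> (\<forall>x. F x \<le> Liminf (at x) F)"

text \<open>Regular subgradient: \<open>F x\<close> finite and
  \<open>liminf_{y \<rightarrow> x} (F y - F x - v\<bullet>(y-x)) / \<parallel>y-x\<parallel> \<ge> 0\<close>, written out with epsilons.\<close>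
definition frechet_subdiff :: "('a::real_inner \<Rightarrow> ereal) \<Rightarrow> 'a \<Rightarrow> 'a set" where
  "frechet_subdiff F x = {v. \<bar>F x\<bar> \<noteq> \<infinity> \<and>
      (\<forall>e>0. \<forall>\<^sub>F y in at x. ereal (real_of_ereal (F x) + v \<bullet> (y - x) - e * norm (y - x)) \<le> F y)}"

definition limiting_subdiff :: "('a::real_inner \<Rightarrow> ereal) \<Rightarrow> 'a \<Rightarrow> 'a set" where
  "limiting_subdiff F x = {v. \<exists>xs vs. xs \<longlonglongrightarrow> x \<and> (\<lambda>j. F (xs j)) \<longlonglongrightarrow> F x \<and>
      (\<forall>j. vs j \<in> frechet_subdiff F (xs j)) \<and> vs \<longlonglongrightarrow> v}"

definition spec_norm :: "real^'n^'n \<Rightarrow> real" where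
  "spec_norm M = onorm (\<lambda>v. M *v v)"

definition phi_cp :: "real \<Rightarrow> real^'n \<Rightarrow> real^'n \<Rightarrow> real" where
  "phi_cp fh g s = fh + g \<bullet> s"

definition phi_q :: "real \<Rightarrow> real^'n \<Rightarrow> real^'n^'n \<Rightarrow> real^'n \<Rightarrow> real" where
  "phi_q fh g M s = fh + g \<bullet> s + (1/2) * (s \<bullet> (M *v s))"

end

theory Submission
  imports Defs
begin

theorem theorem3p7:
  fixes f :: "real^'n \<Rightarrow> real" and gradf :: "real^'n \<Rightarrow> real^'n"
    and h :: "real^'n \<Rightarrow> ereal"
    and psi :: "real^'n \<Rightarrow> real^'n \<Rightarrow> ereal"  \<comment> \<open>psi x s = \<psi>(s;x)\<close>
    and lam :: real
    and B :: "real^'n \<Rightarrow> real^'n^'n"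
    and kappa_f kappa_g kappa_B kappa_h L fh_low :: real
    and gamma1 gamma2 gamma3 eta1h eta2h theta1 theta2 sigma_min :: real
    and x :: "nat \<Rightarrow> real^'n" and sigma :: "nat \<Rightarrow> real" and nu :: "nat \<Rightarrow> real"
    and fx fxs :: "nat \<Rightarrow> real"   \<comment> \<open>\<hat>f(x_k) and \<hat>f(x_k+s_k) used at iteration k\<close>
    and g :: "nat \<Rightarrow> real^'n"     \<comment> \<open>\<hat>\<nabla>f(x_k) used at iteration k\<close>
    and scp s :: "nat \<Rightarrow> real^'n"
    and xi_cp :: "nat \<Rightarrow> ereal" and rho :: "nat \<Rightarrow> ereal"
    and eps :: real
  assumes
    \<comment> \<open>standing assumptions on f, h, psi\<close>
    f_grad: "\<And>y. (f has_derivative (\<lambda>v. gradf y \<bullet> v)) (at y)"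
    and gradf_cont: "continuous_on UNIV gradf"
    and h_proper: "proper_fun h" and h_lsc: "lsc_fun h"
    and psi_proper: "\<And>y. proper_fun (psi y)" and psi_lsc: "\<And>y. lsc_fun (psi y)"
    and psi_zero: "\<And>y. psi y 0 = h y"
    and psi_subdiff: "\<And>y. limiting_subdiff (psi y) 0 \<subseteq> limiting_subdiff h y"
    and lam_pos: "lam > 0"
    and prox_bdd: "\<And>y lam'. 0 < lam' \<Longrightarrow> lam' < lam \<Longrightarrow>
                      \<exists>c::real. \<forall>w. ereal c \<le> psi y w + ereal (norm w ^ 2 / (2 * lam'))"
    and B_sym: "\<And>y. transpose (B y) = B y"
    \<comment> \<open>constants of the algorithm\<close>
    and kappa_f_pos: "kappa_f > 0" and kappa_g_pos: "kappa_g > 0"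
    and gammas: "0 < gamma3" "gamma3 \<le> 1" "1 < gamma1" "gamma1 \<le> gamma2"
    and etas: "0 < eta1h" "eta1h \<le> eta2h" "eta2h < 1"
    and thetas: "0 < theta1" "theta1 < 1" "1 < theta2"
    and sigma_min: "sigma_min > 4 * kappa_f * theta1 * theta2 ^ 2 / (eta1h * (1 - theta1))"
    and sigma0: "sigma 0 \<ge> sigma_min"
    \<comment> \<open>the iterations of iR2N\<close>
    and nu_def: "\<And>k. nu k = theta1 / (spec_norm (B (x k)) + sigma k)"
    and cp_decrease: "\<And>k. ereal (phi_cp (fx k) (g k) (scp k) + (1/2) * (1 / nu k) * norm (scp k) ^ 2)
                            + psi (x k) (scp k)
                          \<le> ereal (phi_cp (fx k) (g k) 0 + (1/2) * (1 / nu k) * norm (0::real^'n) ^ 2)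
                            + psi (x k) 0"
    and xi_cp_def: "\<And>k. xi_cp k = (ereal (phi_cp (fx k) (g k) 0) + psi (x k) 0)
                                 - (ereal (phi_cp (fx k) (g k) (scp k)) + psi (x k) (scp k))"
    and step: "\<And>k. \<exists>t. ereal (phi_q (fx k) (g k) (B (x k)) t + (1/2) * sigma k * norm t ^ 2) + psi (x k) t
                         \<le> ereal (phi_q (fx k) (g k) (B (x k)) (scp k) + (1/2) * sigma k * norm (scp k) ^ 2)
                            + psi (x k) (scp k)
                     \<and> s k = (if norm t > theta2 * norm (scp k) then scp k else t)"
    and rho_def: "\<And>k. rho k =
          ((ereal (fx k) + h (x k)) - (ereal (fxs k) + h (x k + s k)))
          / ((ereal (phi_q (fx k) (g k) (B (x k)) 0) + psi (x k) 0)
             - (ereal (phi_q (fx k) (g k) (B (x k)) (s k)) + psi (x k) (s k)))"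
    and x_update: "\<And>k. x (Suc k) = (if rho k \<ge> ereal eta1h then x k + s k else x k)"
    and sigma_update: "\<And>k. \<exists>sig. (rho k \<ge> ereal eta2h \<longrightarrow> gamma3 * sigma k \<le> sig \<and> sig \<le> sigma k)
              \<and> (ereal eta1h \<le> rho k \<and> rho k < ereal eta2h \<longrightarrow> sigma k \<le> sig \<and> sig \<le> gamma1 * sigma k)
              \<and> (rho k < ereal eta1h \<longrightarrow> gamma1 * sigma k \<le> sig \<and> sig \<le> gamma2 * sigma k)
              \<and> sigma (Suc k) = max sig sigma_min"
    \<comment> \<open>x_0 lies in the domain of h\<close>
    and x0_dom: "h (x 0) \<noteq> \<infinity>"
    \<comment> \<open>(A1)\<close>
    and A1: "L \<ge> 0" "\<And>y t. \<bar>f (y + t) - f y - gradf y \<bullet> t\<bar> \<le> (1/2) * L * norm t ^ 2"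
    \<comment> \<open>(A2)\<close>
    and A2: "kappa_B > 0" "\<And>k. spec_norm (B (x k)) \<le> kappa_B"
    \<comment> \<open>(A3)\<close>
    and A3: "kappa_h > 0"
        "\<And>y t. psi y t \<le> h (y + t) + ereal (kappa_h * norm t ^ 2)"
        "\<And>y t. h (y + t) \<le> psi y t + ereal (kappa_h * norm t ^ 2)"
    \<comment> \<open>(A4)\<close>
    and A4: "\<And>k. (ereal (phi_q (fx k) (g k) (B (x k)) 0) + psi (x k) 0)
                  - (ereal (phi_q (fx k) (g k) (B (x k)) (s k)) + psi (x k) (s k))
                \<ge> ereal (1 - theta1) * xi_cp k"
    \<comment> \<open>(A6)\<close>
    and A6: "\<And>k. \<bar>f (x k) - fx k\<bar> \<le> kappa_f * norm (s k) ^ 2"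
        "\<And>k. \<bar>f (x k + s k) - fxs k\<bar> \<le> kappa_f * norm (s k) ^ 2"
        "\<And>k. norm (gradf (x k) - g k) \<le> kappa_g * norm (s k)"
    \<comment> \<open>(A7)\<close>
    and A7: "\<And>y. ereal (f y) + h y \<ge> ereal fh_low"
    and eps_pos: "eps > 0"
  shows
    "let eta1 = eta1h - 4 * kappa_f * theta1 * theta2 ^ 2 / ((1 - theta1) * sigma_min);
         sigma_succ = max (theta1 * theta2 ^ 2 * (L + kappa_B + 2 * kappa_h + 4 * kappa_f + 2 * kappa_g)
                            / ((1 - theta1) * (1 - eta2h))) (1 / lam);
         sigma_max = max (sigma 0) (gamma2 * sigma_succ);
         nu_min = theta1 / (kappa_B + sigma_max);
         omega_s = (f (x 0) + real_of_ereal (h (x 0)) - fh_low) / ((1/2) * eta1 * (1 - theta1) * nu_min);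
         k_eps = (LEAST k. (1 / nu k) * norm (scp k) < eps);
         S = {k. rho k \<ge> ereal eta1h \<and> k < k_eps};
         U = {k. rho k < ereal eta1h \<and> k < k_eps}
     in (\<exists>k. (1 / nu k) * norm (scp k) < eps) \<and>
        real (card S) + real (card U)
          \<le> (1 + \<bar>log gamma1 gamma3\<bar>) * omega_s / eps ^ 2 + log gamma1 (sigma_max / sigma 0)"
proof -
  define C where "C = L + kappa_B + 2 * kappa_h + 4 * kappa_f + 2 * kappa_g"
  define eta1 where "eta1 = eta1h - 4 * kappa_f * theta1 * theta2 ^ 2 / ((1 - theta1) * sigma_min)"
  define sigma_succ where "sigma_succ = max (theta1 * theta2 ^ 2 * C / ((1 - theta1) * (1 - eta2h))) (1 / lam)"
  define sigma_max where "sigma_max = max (sigma 0) (gamma2 * sigma_succ)"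
  define nu_min where "nu_min = theta1 / (kappa_B + sigma_max)"
  define F where "F = (\<lambda>y. f y + real_of_ereal (h y))"
  define omega_s where "omega_s = (F (x 0) - fh_low) / ((1/2) * eta1 * (1 - theta1) * nu_min)"
  define delta where "delta = eta1 * (1 - theta1) * (1/2) * nu_min * eps ^ 2"
  define nB where "nB = (\<lambda>k. spec_norm (B (x k)))"
  define Ss where "Ss = (\<lambda>n. {k. rho k \<ge> ereal eta1h \<and> k < n})"
  define Us where "Us = (\<lambda>n. {k. rho k < ereal eta1h \<and> k < n})"
  have C_nonneg: "C \<ge> 0" unfolding C_def using A1 A2 A3 kappa_f_pos kappa_g_pos by simp
  have c0pos: "4 * kappa_f * theta1 * theta2 ^ 2 / (eta1h * (1 - theta1)) > 0"
    using kappa_f_pos thetas etas by (intro divide_pos_pos mult_pos_pos) auto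
  have smin_pos: "sigma_min > 0" using c0pos sigma_min by linarith
  have eta1_pos: "eta1 > 0"
  proof -
    have "4 * kappa_f * theta1 * theta2 ^ 2 < sigma_min * (eta1h * (1 - theta1))"
      using sigma_min etas thetas by (simp add: pos_divide_less_eq)
    then have "4 * kappa_f * theta1 * theta2 ^ 2 / ((1 - theta1) * sigma_min) < eta1h"
      using smin_pos thetas by (simp add: divide_less_eq mult_ac)
    then show ?thesis unfolding eta1_def by simp
  qed
  have sig_ge: "sigma k \<ge> sigma_min" for k
  proof (cases k)
    case 0 then show ?thesis using sigma0 by simp
  next
    case (Suc j) then show ?thesis using sigma_update[of j] by auto
  qed
  have sig_pos: "sigma k > 0" for k using sig_ge[of k] smin_pos by linarith
  have nB_nonneg: "0 \<le> nB k" for k unfolding nB_def spec_norm_def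
    by (rule onorm_pos_le) simp
  have nB_le: "nB k \<le> kappa_B" for k unfolding nB_def using A2 by simp
  have nu_eq: "nu k = theta1 / (nB k + sigma k)" for k unfolding nB_def using nu_def by simp
  have nu_pos: "nu k > 0" for k using nu_eq[of k] nB_nonneg[of k] sig_pos[of k] thetas by simp
  have inv_nu: "1 / nu k = (nB k + sigma k) / theta1" for k using nu_eq[of k] by simp
  have nu_le: "nu k \<le> theta1 / sigma_min" for k
    unfolding nu_eq using nB_nonneg[of k] sig_ge[of k] smin_pos thetas
    by (intro divide_left_mono) (auto intro: mult_pos_pos)
  have Bquad: "\<bar>v \<bullet> (B (x k) *v v)\<bar> \<le> nB k * norm v ^ 2" for k v
  proof -
    have 1: "\<bar>v \<bullet> (B (x k) *v v)\<bar> \<le> norm v * norm (B (x k) *v v)" by (rule Cauchy_Schwarz_ineq2)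
    have 2: "norm (B (x k) *v v) \<le> nB k * norm v"
      unfolding nB_def spec_norm_def using onorm[of "\<lambda>v. B (x k) *v v" v] by simp
    have "norm v * norm (B (x k) *v v) \<le> norm v * (nB k * norm v)" using 2 by (simp add: mult_left_mono)
    then show ?thesis using 1 by (simp add: power2_eq_square mult_ac)
  qed
  have s_le: "norm (s k) \<le> theta2 * norm (scp k)" for k
  proof -
    obtain t where "s k = (if norm t > theta2 * norm (scp k) then scp k else t)" using step[of k] by blast
    then show ?thesis using thetas by (cases "norm t > theta2 * norm (scp k)") (auto intro: mult_right_mono[of 1 theta2 "norm (scp k)", simplified])
  qed
  have psi_nm: "\<And>y w. psi y w \<noteq> -\<infinity>" using psi_proper unfolding proper_fun_def by blast
  have h_nm: "\<And>y. h y \<noteq> -\<infinity>" using h_proper unfolding proper_fun_def by blast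
  have fin: "\<bar>psi (x k) (scp k)\<bar> \<noteq> \<infinity> \<and> \<bar>psi (x k) (s k)\<bar> \<noteq> \<infinity> \<and> \<bar>h (x k + s k)\<bar> \<noteq> \<infinity>"
    if hk: "\<bar>h (x k)\<bar> \<noteq> \<infinity>" for k
  proof -
    obtain hx where hx: "h (x k) = ereal hx" using hk h_nm[of "x k"] by (cases "h (x k)") auto
    have pc: "psi (x k) (scp k) \<noteq> \<infinity>"
    proof
      assume "psi (x k) (scp k) = \<infinity>"
      then show False using cp_decrease[of k] psi_zero[of "x k"] hx by simp
    qed
    obtain t where t1: "ereal (phi_q (fx k) (g k) (B (x k)) t + (1/2) * sigma k * norm t ^ 2) + psi (x k) t
                         \<le> ereal (phi_q (fx k) (g k) (B (x k)) (scp k) + (1/2) * sigma k * norm (scp k) ^ 2)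
                            + psi (x k) (scp k)"
      and t2: "s k = (if norm t > theta2 * norm (scp k) then scp k else t)" using step[of k] by blast
    have pt: "psi (x k) t \<noteq> \<infinity>"
    proof
      assume "psi (x k) t = \<infinity>"
      then show False using t1 pc psi_nm[of "x k" "scp k"] by (cases "psi (x k) (scp k)") auto
    qed
    have ps: "psi (x k) (s k) \<noteq> \<infinity>" using t2 pc pt by (cases "norm t > theta2 * norm (scp k)") auto
    have hs: "h (x k + s k) \<noteq> \<infinity>" using A3(3)[of "x k" "s k"] ps by auto
    show ?thesis using pc ps hs psi_nm h_nm by auto
  qed
  have hfin: "\<bar>h (x k)\<bar> \<noteq> \<infinity>" for k
  proof (induction k)
    case 0 then show ?case using x0_dom h_nm[of "x 0"] by auto
  next
    case (Suc k) then show ?case using fin[of k] x_update[of k] by auto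
  qed
  have nu_min_le: "nu_min \<le> nu k" if "sigma k \<le> sigma_max" for k
    unfolding nu_min_def nu_eq using that nB_le[of k] nB_nonneg[of k] sig_pos[of k] thetas
    by (intro divide_left_mono) auto
  have per_k: "(scp k \<noteq> 0 \<and> sigma k \<ge> sigma_succ \<longrightarrow> rho k \<ge> ereal eta2h) \<and>
      (scp k \<noteq> 0 \<and> rho k \<ge> ereal eta1h \<and> (1 / nu k) * norm (scp k) \<ge> eps \<and> sigma k \<le> sigma_max
        \<longrightarrow> F (x k) - F (x k + s k) \<ge> delta)" for k
  proof -
    obtain hx where hx: "h (x k) = ereal hx" using hfin[of k] by (cases "h (x k)") auto
    obtain hs where hs: "h (x k + s k) = ereal hs" using fin[OF hfin[of k]] by (cases "h (x k + s k)") auto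
    obtain pc where pc: "psi (x k) (scp k) = ereal pc" using fin[OF hfin[of k]] by (cases "psi (x k) (scp k)") auto
    obtain ps where ps: "psi (x k) (s k) = ereal ps" using fin[OF hfin[of k]] by (cases "psi (x k) (s k)") auto
    define xi where "xi = fx k + hx - (fx k + g k \<bullet> scp k + pc)"
    define D where "D = fx k + hx - (fx k + g k \<bullet> s k + (1/2) * (s k \<bullet> (B (x k) *v s k)) + ps)"
    define N where "N = fx k + hx - (fxs k + hs)"
    define a where "a = norm (scp k) ^ 2"
    have xi_ge: "xi \<ge> (1/2) * (1 / nu k) * a"
      using cp_decrease[of k] psi_zero[of "x k"] hx pc by (simp add: phi_cp_def xi_def a_def)
    have xi_eq: "xi_cp k = ereal xi"
      using xi_cp_def[of k] psi_zero[of "x k"] hx pc by (simp add: phi_cp_def xi_def)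
    have D_ge: "D \<ge> (1 - theta1) * xi"
      using A4[of k] xi_eq psi_zero[of "x k"] hx ps by (simp add: phi_q_def D_def)
    have rho_eq: "rho k = ereal N / ereal D"
      using rho_def[of k] psi_zero[of "x k"] hx hs ps by (simp add: phi_q_def D_def N_def)
    have sa: "norm (s k) ^ 2 \<le> theta2 ^ 2 * a"
      unfolding a_def using s_le[of k] power_mono[OF s_le[of k], of 2] by (simp add: power_mult_distrib)
    have ND: "\<bar>N - D\<bar> \<le> (1/2) * C * norm (s k) ^ 2"
    proof -
      have e1: "\<bar>f (x k) - fx k\<bar> \<le> kappa_f * norm (s k) ^ 2" by (rule A6(1))
      have e2: "\<bar>f (x k + s k) - fxs k\<bar> \<le> kappa_f * norm (s k) ^ 2" by (rule A6(2))
      have e3: "\<bar>f (x k + s k) - f (x k) - gradf (x k) \<bullet> s k\<bar> \<le> (1/2) * L * norm (s k) ^ 2" by (rule A1(2))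
      have e4: "\<bar>(gradf (x k) - g k) \<bullet> s k\<bar> \<le> kappa_g * norm (s k) ^ 2"
      proof -
        have "\<bar>(gradf (x k) - g k) \<bullet> s k\<bar> \<le> norm (gradf (x k) - g k) * norm (s k)" by (rule Cauchy_Schwarz_ineq2)
        also have "\<dots> \<le> kappa_g * norm (s k) * norm (s k)" using A6(3)[of k] by (simp add: mult_right_mono)
        finally show ?thesis by (simp add: power2_eq_square mult_ac)
      qed
      have e5: "\<bar>s k \<bullet> (B (x k) *v s k)\<bar> \<le> kappa_B * norm (s k) ^ 2"
        using Bquad[where k=k and v="s k"] nB_le[of k] by (meson mult_right_mono order_trans zero_le_power2)
      have e6: "\<bar>ps - hs\<bar> \<le> kappa_h * norm (s k) ^ 2"
        using A3(2)[of "x k" "s k"] A3(3)[of "x k" "s k"] ps hs by simp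
      have "N - D = (fx k - f (x k)) + (f (x k + s k) - fxs k) - (f (x k + s k) - f (x k) - gradf (x k) \<bullet> s k)
                   - (gradf (x k) - g k) \<bullet> s k + (1/2) * (s k \<bullet> (B (x k) *v s k)) + (ps - hs)"
        unfolding N_def D_def by (simp add: inner_diff_left)
      then have "\<bar>N - D\<bar> \<le> kappa_f * norm (s k) ^ 2 + kappa_f * norm (s k) ^ 2 + (1/2) * L * norm (s k) ^ 2
          + kappa_g * norm (s k) ^ 2 + (1/2) * (kappa_B * norm (s k) ^ 2) + kappa_h * norm (s k) ^ 2"
        using e1 e2 e3 e4 e5 e6 unfolding abs_le_iff by linarith
      then show ?thesis unfolding C_def by (simp add: algebra_simps)
    qed
    have NF: "N \<le> F (x k) - F (x k + s k) + 2 * kappa_f * norm (s k) ^ 2"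
      using A6(1)[of k] A6(2)[of k] hx hs unfolding N_def F_def by (simp add: abs_le_iff)
    have a_nonneg: "a \<ge> 0" unfolding a_def by simp
    have Dlow: "D \<ge> (1 - theta1) * ((1/2) * (1 / nu k) * a)"
      using D_ge xi_ge thetas by (meson diff_gt_0_iff_gt less_eq_real_def mult_left_mono order_trans)
    have Dpos: "D > 0" if "scp k \<noteq> 0"
    proof -
      have "a > 0" using that unfolding a_def by simp
      then have "(1 - theta1) * ((1/2) * (1 / nu k) * a) > 0" using thetas nu_pos[of k] by simp
      then show ?thesis using Dlow by linarith
    qed
    have VS: "rho k \<ge> ereal eta2h" if sc: "scp k \<noteq> 0" and sg: "sigma k \<ge> sigma_succ"
    proof -
      have D0: "D > 0" using Dpos sc .
      have "sigma k \<ge> theta1 * theta2 ^ 2 * C / ((1 - theta1) * (1 - eta2h))"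
        using sg unfolding sigma_succ_def by simp
      then have "sigma k * ((1 - theta1) * (1 - eta2h)) \<ge> theta1 * theta2 ^ 2 * C"
        using thetas etas by (simp add: pos_divide_le_eq)
      then have "(nB k + sigma k) * ((1 - theta1) * (1 - eta2h)) \<ge> theta1 * theta2 ^ 2 * C"
        using nB_nonneg[of k] thetas etas
        by (smt (verit) mult_nonneg_nonneg distrib_right)
      then have K: "(nB k + sigma k) / theta1 * ((1 - theta1) * (1 - eta2h)) \<ge> theta2 ^ 2 * C"
        using thetas by (simp add: field_simps)
      have "(1 - eta2h) * D \<ge> (1 - eta2h) * ((1 - theta1) * ((1/2) * (1 / nu k) * a))"
        using Dlow etas by (intro mult_left_mono) auto
      also have "(1 - eta2h) * ((1 - theta1) * ((1/2) * (1 / nu k) * a))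
          = (1/2) * a * ((nB k + sigma k) / theta1 * ((1 - theta1) * (1 - eta2h)))"
        unfolding inv_nu using thetas by (simp add: field_simps)
      also have "\<dots> \<ge> (1/2) * a * (theta2 ^ 2 * C)"
        using K a_nonneg by (intro mult_left_mono) auto
      finally have "(1 - eta2h) * D \<ge> (1/2) * C * (theta2 ^ 2 * a)" by (simp add: mult_ac)
      moreover have "(1/2) * C * (theta2 ^ 2 * a) \<ge> (1/2) * C * norm (s k) ^ 2"
        using sa C_nonneg by (simp add: mult_left_mono)
      ultimately have "N \<ge> eta2h * D" using ND unfolding abs_le_iff by (simp add: algebra_simps)
      then have "N / D \<ge> eta2h" using D0 by (simp add: pos_le_divide_eq)
      then show ?thesis using rho_eq D0 by simp
    qed
    have SD: "F (x k) - F (x k + s k) \<ge> delta"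
      if sc: "scp k \<noteq> 0" and r: "rho k \<ge> ereal eta1h" and ep: "(1 / nu k) * norm (scp k) \<ge> eps"
        and sm: "sigma k \<le> sigma_max"
    proof -
      have D0: "D > 0" using Dpos sc .
      have "N / D \<ge> eta1h" using r rho_eq D0 by simp
      then have N1: "N \<ge> eta1h * D" using D0 by (simp add: pos_le_divide_eq)
      have ia: "(1 / nu k) * a \<le> 2 * D / (1 - theta1)"
        using Dlow thetas by (simp add: field_simps)
      have "a = nu k * ((1 / nu k) * a)" using nu_pos[of k] by simp
      also have "\<dots> \<le> (theta1 / sigma_min) * ((1 / nu k) * a)"
        using nu_le[of k] nu_pos[of k] a_nonneg by (intro mult_right_mono) auto
      also have "\<dots> \<le> (theta1 / sigma_min) * (2 * D / (1 - theta1))"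
        using ia thetas smin_pos by (intro mult_left_mono) auto
      finally have aD: "a \<le> (theta1 / sigma_min) * (2 * D / (1 - theta1))" .
      have "2 * kappa_f * norm (s k) ^ 2 \<le> 2 * kappa_f * (theta2 ^ 2 * a)"
        using sa kappa_f_pos by simp
      also have "\<dots> \<le> 2 * kappa_f * (theta2 ^ 2 * ((theta1 / sigma_min) * (2 * D / (1 - theta1))))"
        using aD kappa_f_pos by (intro mult_left_mono) auto
      also have "\<dots> = (eta1h - eta1) * D" unfolding eta1_def using thetas smin_pos by (simp add: field_simps)
      finally have "F (x k) - F (x k + s k) \<ge> eta1 * D" using NF N1 by (simp add: algebra_simps)
      moreover have "D \<ge> (1 - theta1) * (1/2) * nu_min * eps ^ 2"
      proof -
        have "(1 / nu k) * a = nu k * ((1 / nu k) * norm (scp k)) ^ 2"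
          unfolding a_def using nu_pos[of k] by (simp add: power2_eq_square field_simps)
        also have "\<dots> \<ge> nu_min * eps ^ 2"
          using nu_min_le[OF sm] ep eps_pos nu_pos[of k]
          by (meson less_eq_real_def mult_mono power_mono zero_le_power2)
        finally have "(1 / nu k) * a \<ge> nu_min * eps ^ 2" .
        then have "(1 - theta1) * ((1/2) * (1 / nu k) * a) \<ge> (1 - theta1) * ((1/2) * (nu_min * eps ^ 2))"
          using thetas by (intro mult_left_mono) auto
        from order_trans[OF this Dlow] show ?thesis by (simp add: mult_ac)
      qed
      ultimately show ?thesis unfolding delta_def using eta1_pos
        by (smt (verit) mult_left_mono mult.assoc)
    qed
    show ?thesis using VS SD by blast
  qed
  have vs: "rho k \<ge> ereal eta2h" if "scp k \<noteq> 0" "sigma k \<ge> sigma_succ" for k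
    using per_k[of k] that by blast
  have sd: "F (x k) - F (x k + s k) \<ge> delta"
    if "scp k \<noteq> 0" "rho k \<ge> ereal eta1h" "(1 / nu k) * norm (scp k) \<ge> eps" "sigma k \<le> sigma_max" for k
    using per_k[of k] that by blast
  have succ_pos: "sigma_succ > 0" unfolding sigma_succ_def using lam_pos by (simp add: less_max_iff_disj)
  have g2pos: "gamma2 > 0" using gammas by linarith
  have smax0: "sigma 0 \<le> sigma_max" unfolding sigma_max_def by simp
  have sig_up: "(\<forall>k<n. scp k \<noteq> 0) \<Longrightarrow> sigma n \<le> sigma_max" for n
  proof (induction n)
    case 0 then show ?case using smax0 by simp
  next
    case (Suc n)
    then have IH: "sigma n \<le> sigma_max" and scn: "scp n \<noteq> 0" by auto
    obtain sig where sg: "(rho n \<ge> ereal eta2h \<longrightarrow> gamma3 * sigma n \<le> sig \<and> sig \<le> sigma n)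
              \<and> (ereal eta1h \<le> rho n \<and> rho n < ereal eta2h \<longrightarrow> sigma n \<le> sig \<and> sig \<le> gamma1 * sigma n)
              \<and> (rho n < ereal eta1h \<longrightarrow> gamma1 * sigma n \<le> sig \<and> sig \<le> gamma2 * sigma n)
              \<and> sigma (Suc n) = max sig sigma_min" using sigma_update[of n] by blast
    have e12: "ereal eta1h \<le> ereal eta2h" using etas by simp
    show ?case
    proof (cases "sigma n \<ge> sigma_succ")
      case True
      then have "rho n \<ge> ereal eta2h" using vs scn by blast
      then have "sig \<le> sigma n" using sg by blast
      then show ?thesis using sg sig_ge[of n] IH by auto
    next
      case False
      have "sig \<le> gamma2 * sigma n"
      proof -
        have s0: "sigma n \<le> gamma1 * sigma n" "gamma1 * sigma n \<le> gamma2 * sigma n"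
          using sig_pos[of n] gammas by (auto intro: mult_right_mono)
        have "rho n \<ge> ereal eta2h \<or> (ereal eta1h \<le> rho n \<and> rho n < ereal eta2h) \<or> rho n < ereal eta1h"
          by auto
        then show ?thesis using sg s0 by auto
      qed
      moreover have "gamma2 * sigma n \<le> gamma2 * sigma_succ" using False g2pos by simp
      moreover have "sigma_min \<le> sigma_max" using sigma0 smax0 by linarith
      ultimately show ?thesis using sg unfolding sigma_max_def by auto
    qed
  qed
  have Ss_Suc: "Ss (Suc n) = (if rho n \<ge> ereal eta1h then insert n (Ss n) else Ss n)" for n
    unfolding Ss_def by (auto simp: less_Suc_eq)
  have Us_Suc: "Us (Suc n) = (if rho n < ereal eta1h then insert n (Us n) else Us n)" for n
    unfolding Us_def by (auto simp: less_Suc_eq)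
  have Ss_fin: "finite (Ss n)" for n unfolding Ss_def by auto
  have Us_fin: "finite (Us n)" for n unfolding Us_def by auto
  have Ss_notin: "n \<notin> Ss n" for n unfolding Ss_def by auto
  have Us_notin: "n \<notin> Us n" for n unfolding Us_def by auto
  have card_sum: "card (Ss n) + card (Us n) = n" for n
  proof (induction n)
    case 0 then show ?case unfolding Ss_def Us_def by simp
  next
    case (Suc n) then show ?case
      using Ss_fin[of n] Us_fin[of n] Ss_notin[of n] Us_notin[of n]
      unfolding Ss_Suc[of n] Us_Suc[of n] by auto
  qed
  have sig_low: "sigma n \<ge> sigma 0 * gamma1 ^ card (Us n) * gamma3 ^ card (Ss n)" for n
  proof (induction n)
    case 0 then show ?case unfolding Ss_def Us_def by simp
  next
    case (Suc n)
    obtain sig where sg: "(rho n \<ge> ereal eta2h \<longrightarrow> gamma3 * sigma n \<le> sig \<and> sig \<le> sigma n)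
              \<and> (ereal eta1h \<le> rho n \<and> rho n < ereal eta2h \<longrightarrow> sigma n \<le> sig \<and> sig \<le> gamma1 * sigma n)
              \<and> (rho n < ereal eta1h \<longrightarrow> gamma1 * sigma n \<le> sig \<and> sig \<le> gamma2 * sigma n)
              \<and> sigma (Suc n) = max sig sigma_min" using sigma_update[of n] by blast
    have sgle: "sig \<le> sigma (Suc n)" using sg by simp
    show ?case
    proof (cases "rho n \<ge> ereal eta1h")
      case True
      have "gamma3 * sigma n \<le> sigma n" using gammas sig_pos[of n] by (simp add: mult_le_cancel_right1)
      then have "gamma3 * sigma n \<le> sig" using sg True by (cases "rho n \<ge> ereal eta2h") auto
      moreover have "gamma3 * (sigma 0 * gamma1 ^ card (Us n) * gamma3 ^ card (Ss n)) \<le> gamma3 * sigma n"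
        using Suc.IH gammas by simp
      ultimately show ?thesis
        using sgle True Ss_fin[of n] not_less[of "rho n" "ereal eta1h"] Ss_notin[of n] unfolding Ss_Suc[of n] Us_Suc[of n] by (simp add: mult_ac)
    next
      case False
      then have "gamma1 * sigma n \<le> sig" using sg by simp
      moreover have "gamma1 * (sigma 0 * gamma1 ^ card (Us n) * gamma3 ^ card (Ss n)) \<le> gamma1 * sigma n"
        using Suc.IH gammas by simp
      ultimately show ?thesis
        using sgle False Us_fin[of n] not_le[of "ereal eta1h" "rho n"] Us_notin[of n] unfolding Ss_Suc[of n] Us_Suc[of n] by (simp add: mult_ac)
    qed
  qed
  have F_dec: "(\<forall>k<n. (1 / nu k) * norm (scp k) \<ge> eps) \<Longrightarrow> F (x n) \<le> F (x 0) - delta * card (Ss n)" for n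
  proof (induction n)
    case 0 then show ?case unfolding Ss_def by simp
  next
    case (Suc n)
    then have IH: "F (x n) \<le> F (x 0) - delta * card (Ss n)" and en: "(1 / nu n) * norm (scp n) \<ge> eps"
      and all: "\<forall>k<Suc n. (1 / nu k) * norm (scp k) \<ge> eps" by auto
    have nz: "scp k \<noteq> 0" if "k < Suc n" for k
    proof
      assume "scp k = 0" then show False using all that eps_pos by auto
    qed
    have sm: "sigma n \<le> sigma_max" using sig_up[of n] nz by auto
    show ?case
    proof (cases "rho n \<ge> ereal eta1h")
      case True
      then have "F (x n) - F (x n + s n) \<ge> delta" using sd nz[of n] en sm by blast
      then show ?thesis using IH True x_update[of n] Ss_fin[of n] Ss_notin[of n]
        unfolding Ss_Suc[of n] by (simp add: algebra_simps)
    next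
      case False
      then show ?thesis using IH x_update[of n] unfolding Ss_Suc[of n] by simp
    qed
  qed
  define lg where "lg = log gamma1 gamma3"
  define Bound where "Bound = (1 + \<bar>lg\<bar>) * omega_s / eps ^ 2 + log gamma1 (sigma_max / sigma 0)"
  have delta_pos: "delta > 0"
    unfolding delta_def nu_min_def using eta1_pos thetas eps_pos A2(1) sig_pos[of 0] smax0
    by (intro mult_pos_pos divide_pos_pos) auto
  have Fx_low: "F (x n) \<ge> fh_low" for n
  proof -
    obtain hx where "h (x n) = ereal hx" using hfin[of n] by (cases "h (x n)") auto
    then show ?thesis using A7[of "x n"] unfolding F_def by simp
  qed
  have lg_nonpos: "lg \<le> 0"
  proof -
    have "log gamma1 gamma3 \<le> log gamma1 1" using gammas by (intro log_mono) auto
    then show ?thesis unfolding lg_def by simp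
  qed
  have bound: "real n \<le> Bound" if P: "\<forall>k<n. (1 / nu k) * norm (scp k) \<ge> eps" for n
  proof -
    have nz: "\<forall>k<n. scp k \<noteq> 0"
    proof (intro allI impI notI)
      fix k assume "k < n" "scp k = 0" then show False using P eps_pos by auto
    qed
    have Sb: "real (card (Ss n)) \<le> omega_s / eps ^ 2"
    proof -
      have "delta * card (Ss n) \<le> F (x 0) - fh_low" using F_dec[OF P] Fx_low[of n] by linarith
      then have "real (card (Ss n)) \<le> (F (x 0) - fh_low) / delta" using delta_pos
        by (simp add: pos_le_divide_eq mult_ac)
      also have "(F (x 0) - fh_low) / delta = omega_s / eps ^ 2"
        unfolding omega_s_def delta_def by (simp add: field_simps)
      finally show ?thesis .
    qed
    have Ub: "real (card (Us n)) \<le> log gamma1 (sigma_max / sigma 0) - card (Ss n) * lg"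
    proof -
      have pos: "sigma 0 * gamma1 ^ card (Us n) * gamma3 ^ card (Ss n) > 0"
        using sig_pos[of 0] gammas by simp
      have "sigma 0 * gamma1 ^ card (Us n) * gamma3 ^ card (Ss n) \<le> sigma_max"
        using sig_low[of n] sig_up[OF nz] by linarith
      then have "log gamma1 (sigma 0 * gamma1 ^ card (Us n) * gamma3 ^ card (Ss n)) \<le> log gamma1 sigma_max"
        using pos gammas by (intro log_mono) auto
      moreover have "log gamma1 (sigma 0 * gamma1 ^ card (Us n) * gamma3 ^ card (Ss n))
          = log gamma1 (sigma 0) + card (Us n) + card (Ss n) * lg"
        using sig_pos[of 0] gammas unfolding lg_def by (simp add: log_mult log_nat_power)
      moreover have "log gamma1 (sigma_max / sigma 0) = log gamma1 sigma_max - log gamma1 (sigma 0)"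
        using sig_pos[of 0] smax0 by (simp add: log_divide)
      ultimately show ?thesis by linarith
    qed
    have "real n = card (Ss n) + card (Us n)" using card_sum[of n] by simp
    also have "\<dots> \<le> card (Ss n) * (1 + \<bar>lg\<bar>) + log gamma1 (sigma_max / sigma 0)"
      using Ub lg_nonpos by (simp add: algebra_simps)
    also have "\<dots> \<le> omega_s / eps ^ 2 * (1 + \<bar>lg\<bar>) + log gamma1 (sigma_max / sigma 0)"
      using Sb by (intro add_right_mono mult_right_mono) auto
    finally show ?thesis unfolding Bound_def by (simp add: mult_ac)
  qed
  have ex: "\<exists>k. (1 / nu k) * norm (scp k) < eps"
  proof (rule ccontr)
    assume "\<not> ?thesis"
    then have "\<forall>k<n. (1 / nu k) * norm (scp k) \<ge> eps" for n by (simp add: not_less)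
    then have "real (nat \<lceil>Bound\<rceil> + 1) \<le> Bound" using bound by blast
    then show False by linarith
  qed
  define k_eps where "k_eps = (LEAST k. (1 / nu k) * norm (scp k) < eps)"
  have "\<forall>k<k_eps. (1 / nu k) * norm (scp k) \<ge> eps"
    unfolding k_eps_def using not_less_Least by (metis not_less)
  from bound[OF this] have final: "real (card (Ss k_eps)) + real (card (Us k_eps)) \<le> Bound"
    using card_sum[of k_eps] by simp
  show ?thesis unfolding Let_def
    using ex final unfolding Bound_def lg_def k_eps_def Ss_def Us_def omega_s_def F_def nu_min_def
      sigma_max_def sigma_succ_def C_def eta1_def by simp
qed

end
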